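(* For $n\ge 0$ let $S_n$ be the lattice of order ideals of the shifted staircase poset $\{(i,j)\in\mathbb Z^2:1\le i\le j\le n\}$ (componentwise order), ordered by inclusion. Then \[ \sum_{n=0}^\infty \d(S_n)\,x^n = \frac{8x\left(1+\sqrt{1-4x}-x\big(3+\sqrt{1-4x}\big)\right)}{(1-4x)\big(1-4x+\sqrt{1-4x}\big)^3}. \]
   Context: For a finite poset $Q$, $\d(Q)=\sum_{(p,q)\in Q\times Q}\d(p,q)$ is the Wiener index of its Hasse diagram, where $\d(p,q)$ is the graph distance in the Hasse diagram (edges = cover relations) and the sum runs over ordered pairs. $S_0$ has a single element. *)

theory Defs
  imports Complex_Main
begin

definition shifted_staircase :: "nat \<Rightarrow> (nat \<times> nat) set" where
  "shifted_staircase n = {(i, j). 1 \<le> i \<and> i \<le> j \<and> j \<le> n}"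

definition order_ideals :: "nat \<Rightarrow> (nat \<times> nat) set set" where
  "order_ideals n = {I. I \<subseteq> shifted_staircase n \<and>
     (\<forall>p\<in>I. \<forall>q\<in>shifted_staircase n.
        fst q \<le> fst p \<and> snd q \<le> snd p \<longrightarrow> q \<in> I)}"

text \<open>S_n: the lattice of order ideals, ordered by inclusion (given by its carrier).\<close>
definition S :: "nat \<Rightarrow> (nat \<times> nat) set set" where
  "S n = order_ideals n"

definition covers :: "'a set set \<Rightarrow> 'a set \<Rightarrow> 'a set \<Rightarrow> bool" where
  "covers A I J \<longleftrightarrow> I \<in> A \<and> J \<in> A \<and> I \<subset> J \<and> \<not> (\<exists>K\<in>A. I \<subset> K \<and> K \<subset> J)"

definition hasse_adj :: "'a set set \<Rightarrow> 'a set \<Rightarrow> 'a set \<Rightarrow> bool" where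
  "hasse_adj A I J \<longleftrightarrow> covers A I J \<or> covers A J I"

definition hasse_walk :: "'a set set \<Rightarrow> nat \<Rightarrow> 'a set \<Rightarrow> 'a set \<Rightarrow> bool" where
  "hasse_walk A k p q \<longleftrightarrow> (\<exists>xs. length xs = Suc k \<and> xs ! 0 = p \<and> xs ! k = q \<and>
      set xs \<subseteq> A \<and> (\<forall>i<k. hasse_adj A (xs ! i) (xs ! Suc i)))"

definition hasse_dist :: "'a set set \<Rightarrow> 'a set \<Rightarrow> 'a set \<Rightarrow> nat" where
  "hasse_dist A p q = (LEAST k. hasse_walk A k p q)"

definition wiener :: "'a set set \<Rightarrow> nat" where
  "wiener A = (\<Sum>(p, q)\<in>A \<times> A. hasse_dist A p q)"

end

theory Submission
  imports Defs "HOL-Analysis.Generalised_Binomial_Theorem"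
begin

definition R :: "nat \<Rightarrow> (nat \<times> nat) set" where
  "R m = {(1,j)| j. 1 \<le> j \<and> j \<le> m}"
definition sh :: "(nat \<times> nat) set \<Rightarrow> (nat \<times> nat) set" where
  "sh K = (\<lambda>(i,j). (Suc i, Suc j)) ` K"

lemma S_iff: "I \<in> S n \<longleftrightarrow> I \<subseteq> shifted_staircase n \<and>
     (\<forall>i j a b. (i,j) \<in> I \<longrightarrow> 1 \<le> a \<longrightarrow> a \<le> b \<longrightarrow> a \<le> i \<longrightarrow> b \<le> j \<longrightarrow> (a,b) \<in> I)"
  unfolding S_def order_ideals_def shifted_staircase_def
  by (auto; fastforce)

lemma stair_mem: "(i,j) \<in> shifted_staircase n \<longleftrightarrow> 1 \<le> i \<and> i \<le> j \<and> j \<le> n"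
  by (simp add: shifted_staircase_def)

lemma S0: "S 0 = {{}}"
  by (force simp: S_iff shifted_staircase_def)

lemma S_mono: "I \<in> S n \<Longrightarrow> I \<in> S (Suc n)"
  by (auto simp: S_iff stair_mem)

lemma S_img: "K \<in> S n \<Longrightarrow> R (Suc n) \<union> sh K \<in> S (Suc n)"
proof -
  assume K: "K \<in> S n"
  show ?thesis unfolding S_iff
  proof (intro conjI allI impI)
    show "R (Suc n) \<union> sh K \<subseteq> shifted_staircase (Suc n)"
      using K by (force simp: S_iff stair_mem R_def sh_def)
  next
    fix i j a b assume h: "(i, j) \<in> R (Suc n) \<union> sh K" "1 \<le> a" "a \<le> b" "a \<le> i" "b \<le> j"
    show "(a, b) \<in> R (Suc n) \<union> sh K"
    proof (cases "a = 1")
      case True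
      then show ?thesis using h K by (force simp: S_iff stair_mem R_def sh_def)
    next
      case False
      then obtain a' b' where ab: "a = Suc a'" "b = Suc b'" "1 \<le> a'" using h
        by (metis One_nat_def Suc_le_D le_antisym le_trans not_less_eq_eq)
      from h(1) h(2) False h(4) have "(i,j) \<in> sh K" by (auto simp: R_def)
      then obtain i' j' where ij: "i = Suc i'" "j = Suc j'" "(i',j') \<in> K" by (auto simp: sh_def)
      have "(a',b') \<in> K" using K ij ab h unfolding S_iff by auto
      then show ?thesis using ab by (auto simp: sh_def)
    qed
  qed
qed

lemma S_Suc: "S (Suc n) = S n \<union> (\<lambda>K. R (Suc n) \<union> sh K) ` S n"
proof
  show "S n \<union> (\<lambda>K. R (Suc n) \<union> sh K) ` S n \<subseteq> S (Suc n)"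
    using S_mono S_img by blast
next
  show "S (Suc n) \<subseteq> S n \<union> (\<lambda>K. R (Suc n) \<union> sh K) ` S n"
  proof
    fix I assume I: "I \<in> S (Suc n)"
    have IS: "I \<subseteq> shifted_staircase (Suc n)" using I by (simp add: S_iff)
    have ID: "\<And>i j a b. (i,j) \<in> I \<Longrightarrow> 1 \<le> a \<Longrightarrow> a \<le> b \<Longrightarrow> a \<le> i \<Longrightarrow> b \<le> j \<Longrightarrow> (a,b) \<in> I"
      using I by (simp add: S_iff)
    have Ist: "\<And>i j. (i,j) \<in> I \<Longrightarrow> 1 \<le> i \<and> i \<le> j \<and> j \<le> Suc n"
      using IS by (auto simp: stair_mem)
    show "I \<in> S n \<union> (\<lambda>K. R (Suc n) \<union> sh K) ` S n"
    proof (cases "(1, Suc n) \<in> I")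
      case False
      have "I \<subseteq> shifted_staircase n"
      proof
        fix p assume p: "p \<in> I"
        obtain i j where pij: "p = (i,j)" by force
        have "j \<le> n"
        proof (rule ccontr)
          assume "\<not> j \<le> n"
          with Ist p pij have "j = Suc n" "1 \<le> i" by force+
          then have "(1, Suc n) \<in> I" using ID[of i j 1 "Suc n"] p pij by simp
          with False show False by simp
        qed
        then show "p \<in> shifted_staircase n" using p pij Ist by (auto simp: stair_mem)
      qed
      then have "I \<in> S n" using ID by (simp add: S_iff)
      then show ?thesis by simp
    next
      case True
      define K where "K = {(i,j). 1 \<le> i \<and> (Suc i, Suc j) \<in> I}"
      have RI: "R (Suc n) \<subseteq> I"
      proof
        fix p assume "p \<in> R (Suc n)"
        then obtain j where "p = (1,j)" "1 \<le> j" "j \<le> Suc n" by (auto simp: R_def)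
        then show "p \<in> I" using ID[of 1 "Suc n" 1 j] True by simp
      qed
      have "I = R (Suc n) \<union> sh K"
      proof
        show "I \<subseteq> R (Suc n) \<union> sh K"
        proof
          fix p assume p: "p \<in> I"
          obtain i j where pij: "p = (i,j)" by force
          show "p \<in> R (Suc n) \<union> sh K"
          proof (cases "i = 1")
            case True then show ?thesis using p pij Ist by (auto simp: R_def)
          next
            case False
            have "1 \<le> i" "i \<le> j" using Ist p pij by auto
            then obtain i' j' where "i = Suc i'" "j = Suc j'" "1 \<le> i'" using False
              by (metis One_nat_def Suc_le_D Suc_le_mono le_antisym not_less_eq_eq)
            then show ?thesis using p pij by (auto simp: sh_def K_def image_iff)
          qed
        qed
      next
        show "R (Suc n) \<union> sh K \<subseteq> I" using RI by (auto simp: sh_def K_def)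
      qed
      moreover have "K \<in> S n"
        unfolding S_iff
      proof (intro conjI allI impI)
        show "K \<subseteq> shifted_staircase n" using Ist by (fastforce simp: K_def stair_mem)
        fix i j a b assume "(i, j) \<in> K" "1 \<le> a" "a \<le> b" "a \<le> i" "b \<le> j"
        then show "(a, b) \<in> K" using ID[of "Suc i" "Suc j" "Suc a" "Suc b"] by (auto simp: K_def)
      qed
      ultimately show ?thesis by blast
    qed
  qed
qed


lemma finite_stair: "finite (shifted_staircase n)"
  by (rule finite_subset[of _ "{1..n} \<times> {1..n}"]) (auto simp: shifted_staircase_def)

lemma finite_S: "finite (S n)"
  by (rule finite_subset[of _ "Pow (shifted_staircase n)"]) (auto simp: S_iff finite_stair)

lemma S_sub: "I \<in> S n \<Longrightarrow> I \<subseteq> shifted_staircase n"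
  by (simp add: S_iff)

lemma S_finite_mem: "I \<in> S n \<Longrightarrow> finite I"
  using S_sub finite_stair finite_subset by blast

lemma sh_inj: "inj sh"
proof (rule injI)
  fix A B assume "sh A = sh B"
  moreover have "inj (\<lambda>(i::nat,j::nat). (Suc i, Suc j))" by (auto simp: inj_def)
  ultimately show "A = B" unfolding sh_def by (simp add: inj_image_eq_iff)
qed

lemma img_inj: "inj_on (\<lambda>K. R (Suc n) \<union> sh K) (S n)"
proof (rule inj_onI)
  fix A B assume A: "A \<in> S n" and B: "B \<in> S n" and eq: "R (Suc n) \<union> sh A = R (Suc n) \<union> sh B"
  have "\<And>X. X \<in> S n \<Longrightarrow> sh X = (R (Suc n) \<union> sh X) \<inter> {p. 2 \<le> fst p}"
  proof -
    fix X assume "X \<in> S n"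
    then have "\<forall>(i,j)\<in>X. 1 \<le> i" using S_sub by (force simp: stair_mem)
    then show "sh X = (R (Suc n) \<union> sh X) \<inter> {p. 2 \<le> fst p}"
      by (force simp: R_def sh_def)
  qed
  then have "sh A = sh B" using A B eq by metis
  then show "A = B" using sh_inj by (simp add: inj_eq)
qed

lemma img_disj: "S n \<inter> (\<lambda>K. R (Suc n) \<union> sh K) ` S n = {}"
proof -
  have "\<And>I. I \<in> S n \<Longrightarrow> (1, Suc n) \<notin> I" using S_sub by (force simp: stair_mem)
  moreover have "\<And>K. (1, Suc n) \<in> R (Suc n) \<union> sh K" by (simp add: R_def)
  ultimately show ?thesis by blast
qed

lemma sum_S_Suc: "(\<Sum>I\<in>S (Suc n). f I) = (\<Sum>I\<in>S n. f I) + (\<Sum>K\<in>S n. f (R (Suc n) \<union> sh K))"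
proof -
  have "(\<Sum>I\<in>S (Suc n). f I) = (\<Sum>I\<in>S n. f I) + (\<Sum>I\<in>(\<lambda>K. R (Suc n) \<union> sh K) ` S n. f I)"
    unfolding S_Suc by (rule sum.union_disjoint) (use finite_S img_disj in auto)
  also have "(\<Sum>I\<in>(\<lambda>K. R (Suc n) \<union> sh K) ` S n. f I) = (\<Sum>K\<in>S n. f (R (Suc n) \<union> sh K))"
    by (rule sum.reindex_cong[OF img_inj]) auto
  finally show ?thesis .
qed

definition dg :: "(nat \<times> nat) set \<Rightarrow> nat" where
  "dg I = card {i. (i,i) \<in> I}"

lemma diag_img: "{i. (i,i) \<in> R (Suc n) \<union> sh K} = insert 1 (Suc ` {i. (i,i) \<in> K})"
  by (auto simp: R_def sh_def image_iff)

lemma seg_Suc: "insert 1 (Suc ` {1..m}) = {1..Suc m}"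
proof -
  have "Suc ` {1..m} = {2..Suc m}" by (simp add: image_Suc_atLeastAtMost)
  then show ?thesis by auto
qed

lemma diag_seg: "I \<in> S n \<Longrightarrow> {i. (i,i) \<in> I} = {1..dg I}"
proof (induction n arbitrary: I)
  case 0
  then show ?case by (simp add: S0 dg_def)
next
  case (Suc n)
  from Suc.prems show ?case unfolding S_Suc
  proof
    assume "I \<in> S n" then show ?thesis by (rule Suc.IH)
  next
    assume "I \<in> (\<lambda>K. R (Suc n) \<union> sh K) ` S n"
    then obtain K where K: "K \<in> S n" "I = R (Suc n) \<union> sh K" by blast
    have "{i. (i,i) \<in> I} = {1..Suc (dg K)}"
      using K diag_img Suc.IH[OF K(1)] seg_Suc by simp
    then show ?thesis by (simp add: dg_def)
  qed
qed

lemma dg_img: "K \<in> S n \<Longrightarrow> dg (R (Suc n) \<union> sh K) = Suc (dg K)"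
proof -
  assume K: "K \<in> S n"
  have "{i. (i,i) \<in> R (Suc n) \<union> sh K} = {1..Suc (dg K)}"
    using diag_img diag_seg[OF K] seg_Suc by simp
  then show ?thesis by (simp add: dg_def)
qed

definition offd :: "(nat \<times> nat) set \<Rightarrow> (nat \<times> nat) set" where
  "offd I = (\<lambda>(i,j). (i, j - 1)) ` {p\<in>I. fst p < snd p}"

lemma offd_img: "offd (R (Suc n) \<union> sh K) = R n \<union> sh (offd K)"
proof -
  have 1: "offd (R (Suc n)) = R n"
    unfolding offd_def R_def
  proof (intro equalityI subsetI)
    fix p assume "p \<in> (\<lambda>(i, j). (i, j - 1)) ` {p \<in> {(1, j) |j. 1 \<le> j \<and> j \<le> Suc n}. fst p < snd p}"
    then show "p \<in> {(1::nat, j) |j. 1 \<le> j \<and> j \<le> n}" by auto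
  next
    fix p assume "p \<in> {(1::nat, j) |j. 1 \<le> j \<and> j \<le> n}"
    then obtain j where j: "p = (1,j)" "1 \<le> j" "j \<le> n" by auto
    show "p \<in> (\<lambda>(i, j). (i, j - 1)) ` {p \<in> {(1, j) |j. 1 \<le> j \<and> j \<le> Suc n}. fst p < snd p}"
      by (rule image_eqI[of _ _ "(1, Suc j)"]) (use j in auto)
  qed
  have 2: "offd (sh K) = sh (offd K)"
    unfolding offd_def sh_def by (force simp: image_iff)
  have "offd (A \<union> B) = offd A \<union> offd B" for A B by (auto simp: offd_def)
  then show ?thesis using 1 2 by simp
qed

lemma sum_offd: "(\<Sum>I\<in>S (Suc n). h (offd I)) = 2 * (\<Sum>K\<in>S n. (h K :: real))"
proof (induction n arbitrary: h)
  case 0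
  have "offd {} = {}" by (simp add: offd_def)
  moreover have "offd (R (Suc 0) \<union> sh {}) = {}" using offd_img[of 0 "{}"] by (simp add: R_def sh_def offd_def)
  ultimately show ?case by (simp add: sum_S_Suc S0)
next
  case (Suc n)
  have "(\<Sum>I\<in>S (Suc (Suc n)). h (offd I)) = (\<Sum>I\<in>S (Suc n). h (offd I)) + (\<Sum>K\<in>S (Suc n). h (R (Suc n) \<union> sh (offd K)))"
    by (simp add: sum_S_Suc offd_img)
  also have "\<dots> = 2 * (\<Sum>K\<in>S n. h K) + 2 * (\<Sum>K\<in>S n. h (R (Suc n) \<union> sh K))"
    using Suc.IH[of h] Suc.IH[of "\<lambda>X. h (R (Suc n) \<union> sh X)"] by simp
  also have "\<dots> = 2 * (\<Sum>K\<in>S (Suc n). h K)" by (simp add: sum_S_Suc algebra_simps)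
  finally show ?case .
qed


definition sd :: "'a set \<Rightarrow> 'a set \<Rightarrow> 'a set" where
  "sd I J = (I - J) \<union> (J - I)"

lemma card_seg_sd: "real (card (sd {1..a::nat} {1..b})) = \<bar>real a - real b\<bar>"
proof (cases "a \<le> b")
  case True
  then have "sd {1..a} {1..b} = {Suc a..b}" by (auto simp: sd_def)
  then show ?thesis using True by simp
next
  case False
  then have "sd {1..a} {1..b} = {Suc b..a}" by (auto simp: sd_def)
  then show ?thesis using False by simp
qed

lemma card_split:
  assumes I: "I \<in> S n" and J: "J \<in> S n"
  shows "real (card (sd I J)) = real (card (sd (offd I) (offd J))) + \<bar>real (dg I) - real (dg J)\<bar>"
proof -
  let ?f = "\<lambda>(i::nat,j::nat). (i, j - 1)"
  let ?D = "{p::nat\<times>nat. fst p < snd p}"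
  have fin: "finite (sd I J)" using S_finite_mem[OF I] S_finite_mem[OF J] by (simp add: sd_def)
  have le: "\<And>p. p \<in> sd I J \<Longrightarrow> fst p \<le> snd p"
    using S_sub[OF I] S_sub[OF J] by (auto simp: sd_def stair_mem)
  have split: "sd I J = (sd I J \<inter> ?D) \<union> (sd I J \<inter> {p. fst p = snd p})"
    using le by fastforce
  have c1: "card (sd I J) = card (sd I J \<inter> ?D) + card (sd I J \<inter> {p. fst p = snd p})"
    by (subst split, rule card_Un_disjoint) (use fin in auto)
  moreover have injf: "inj_on ?f ?D" by (auto simp: inj_on_def)
  have "sd (offd I) (offd J) = ?f ` (sd I J \<inter> ?D)"
  proof -
    have "offd I = ?f ` (I \<inter> ?D)" "offd J = ?f ` (J \<inter> ?D)" by (auto simp: offd_def)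
    moreover have "?f ` (I \<inter> ?D) - ?f ` (J \<inter> ?D) = ?f ` (I \<inter> ?D - J \<inter> ?D)"
      by (rule inj_on_image_set_diff[OF injf, symmetric]) auto
    moreover have "?f ` (J \<inter> ?D) - ?f ` (I \<inter> ?D) = ?f ` (J \<inter> ?D - I \<inter> ?D)"
      by (rule inj_on_image_set_diff[OF injf, symmetric]) auto
    ultimately show ?thesis by (simp add: sd_def image_Un Int_Un_distrib2 Diff_Int_distrib2)
  qed
  moreover have "inj_on ?f (sd I J \<inter> ?D)" by (rule inj_on_subset[OF injf]) auto
  then have "card (?f ` (sd I J \<inter> ?D)) = card (sd I J \<inter> ?D)" by (rule card_image)
  ultimately have "card (sd (offd I) (offd J)) = card (sd I J \<inter> ?D)" by simp
  moreover have "card (sd I J \<inter> {p. fst p = snd p}) = card (sd {i. (i,i) \<in> I} {i. (i,i) \<in> J})"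
  proof -
    have "sd I J \<inter> {p. fst p = snd p} = (\<lambda>i. (i,i)) ` sd {i. (i,i) \<in> I} {i. (i,i) \<in> J}"
      by (auto simp: sd_def image_iff)
    then show ?thesis by (simp add: card_image inj_on_def)
  qed
  moreover have "real (card (sd {i. (i,i) \<in> I} {i. (i,i) \<in> J})) = \<bar>real (dg I) - real (dg J)\<bar>"
    using diag_seg[OF I] diag_seg[OF J] card_seg_sd by simp
  ultimately show ?thesis using c1 by simp
qed

definition W :: "nat \<Rightarrow> real" where
  "W n = (\<Sum>I\<in>S n. \<Sum>J\<in>S n. real (card (sd I J)))"
definition E :: "nat \<Rightarrow> real" where
  "E n = (\<Sum>I\<in>S n. \<Sum>J\<in>S n. \<bar>real (dg I) - real (dg J)\<bar>)"

lemma W_Suc: "W (Suc n) = 4 * W n + E (Suc n)"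
proof -
  have "W (Suc n) = (\<Sum>I\<in>S (Suc n). \<Sum>J\<in>S (Suc n). real (card (sd (offd I) (offd J)))) + E (Suc n)"
    unfolding W_def E_def by (simp add: card_split sum.distrib)
  also have "(\<Sum>I\<in>S (Suc n). \<Sum>J\<in>S (Suc n). real (card (sd (offd I) (offd J))))
      = (\<Sum>I\<in>S (Suc n). 2 * (\<Sum>J\<in>S n. real (card (sd (offd I) J))))"
    by (rule sum.cong[OF refl]) (rule sum_offd)
  also have "\<dots> = 2 * (\<Sum>I\<in>S (Suc n). (\<Sum>J\<in>S n. real (card (sd (offd I) J))))"
    by (simp add: sum_distrib_left)
  also have "(\<Sum>I\<in>S (Suc n). (\<Sum>J\<in>S n. real (card (sd (offd I) J)))) = 2 * W n"
    unfolding W_def by (rule sum_offd[where h = "\<lambda>X. \<Sum>J\<in>S n. real (card (sd X J))"])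
  finally show ?thesis by simp
qed

lemma E_Suc: "E (Suc n) = 4 * E n + 2 * (\<Sum>I\<in>S n. \<Sum>J\<in>S n. if dg I = dg J then 1 else 0)"
proof -
  have key: "\<And>a b::nat. \<bar>real a - real b\<bar> + \<bar>real a - real (Suc b)\<bar> + (\<bar>real (Suc a) - real b\<bar> + \<bar>real (Suc a) - real (Suc b)\<bar>)
     = 4 * \<bar>real a - real b\<bar> + 2 * (if a = b then 1 else 0)"
  proof -
    fix a b :: nat
    consider "a = b" | "Suc a \<le> b" | "Suc b \<le> a" by linarith
    then show "\<bar>real a - real b\<bar> + \<bar>real a - real (Suc b)\<bar> + (\<bar>real (Suc a) - real b\<bar> + \<bar>real (Suc a) - real (Suc b)\<bar>)
     = 4 * \<bar>real a - real b\<bar> + 2 * (if a = b then 1 else 0)"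
    proof cases
      case 2 then have "real (Suc a) \<le> real b" by (simp only: of_nat_le_iff)
      then show ?thesis by auto
    next
      case 3 then have "real (Suc b) \<le> real a" by (simp only: of_nat_le_iff)
      then show ?thesis by auto
    qed auto
  qed
  have "E (Suc n) = (\<Sum>I\<in>S n. \<Sum>J\<in>S n. \<bar>real (dg I) - real (dg J)\<bar> + \<bar>real (dg I) - real (Suc (dg J))\<bar>
     + (\<bar>real (Suc (dg I)) - real (dg J)\<bar> + \<bar>real (Suc (dg I)) - real (Suc (dg J))\<bar>))"
    unfolding E_def by (simp add: sum_S_Suc dg_img sum.distrib sum_distrib_left cong: sum.cong)
  also have "\<dots> = (\<Sum>I\<in>S n. \<Sum>J\<in>S n. 4 * \<bar>real (dg I) - real (dg J)\<bar> + 2 * (if dg I = dg J then 1 else 0))"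
    by (simp only: key)
  also have "\<dots> = 4 * E n + 2 * (\<Sum>I\<in>S n. \<Sum>J\<in>S n. if dg I = dg J then 1 else 0)"
    unfolding E_def by (simp only: sum.distrib sum_distrib_left)
  finally show ?thesis .
qed


lemma pascal_sum: "(\<Sum>k\<le>Suc n. real (Suc n choose k) * h k) =
   (\<Sum>k\<le>n. real (n choose k) * h k) + (\<Sum>k\<le>n. real (n choose k) * h (Suc k))"
proof -
  have a: "(\<Sum>k\<le>Suc n. real (Suc n choose k) * h k) = real (Suc n choose 0) * h 0 + (\<Sum>k\<le>n. real (Suc n choose Suc k) * h (Suc k))"
    by (rule sum.atMost_Suc_shift)
  have a2: "(\<Sum>k\<le>n. real (Suc n choose Suc k) * h (Suc k)) = (\<Sum>k\<le>n. real (n choose Suc k) * h (Suc k)) + (\<Sum>k\<le>n. real (n choose k) * h (Suc k))"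
    by (simp add: sum.distrib algebra_simps)
  have b: "(\<Sum>k\<le>Suc n. real (n choose k) * h k) = real (n choose 0) * h 0 + (\<Sum>k\<le>n. real (n choose Suc k) * h (Suc k))"
    by (rule sum.atMost_Suc_shift)
  have c: "(\<Sum>k\<le>Suc n. real (n choose k) * h k) = (\<Sum>k\<le>n. real (n choose k) * h k)"
    by simp
  show ?thesis using a a2 b c by simp
qed

lemma dist_dg: "(\<Sum>I\<in>S n. h (dg I)) = (\<Sum>k\<le>n. real (n choose k) * h k)"
proof (induction n arbitrary: h)
  case 0
  then show ?case by (simp add: S0 dg_def)
next
  case (Suc n)
  have "(\<Sum>I\<in>S (Suc n). h (dg I)) = (\<Sum>I\<in>S n. h (dg I)) + (\<Sum>K\<in>S n. h (Suc (dg K)))"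
    by (simp add: sum_S_Suc dg_img cong: sum.cong)
  also have "\<dots> = (\<Sum>k\<le>n. real (n choose k) * h k) + (\<Sum>k\<le>n. real (n choose k) * h (Suc k))"
    using Suc.IH[of h] Suc.IH[of "\<lambda>k. h (Suc k)"] by simp
  finally show ?case using pascal_sum[of n h] by linarith
qed

lemma Z_eq: "(\<Sum>I\<in>S n. \<Sum>J\<in>S n. if dg I = dg J then 1 else 0) = real ((2*n) choose n)"
proof -
  have inner: "(\<Sum>J\<in>S n. if a = dg J then 1 else 0) = real (n choose a)" for a
  proof -
    have "(\<Sum>J\<in>S n. if a = dg J then 1 else 0) = (\<Sum>k\<le>n. real (n choose k) * (if a = k then 1 else 0))"
      by (rule dist_dg)
    also have "\<dots> = (\<Sum>k\<le>n. if a = k then real (n choose k) else 0)"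
      by (rule sum.cong) auto
    also have "\<dots> = real (n choose a)"
      by (simp add: sum.delta)
    finally show ?thesis .
  qed
  have "(\<Sum>I\<in>S n. \<Sum>J\<in>S n. if dg I = dg J then 1 else 0) = (\<Sum>I\<in>S n. real (n choose dg I))"
    using inner by simp
  also have "\<dots> = (\<Sum>k\<le>n. real (n choose k) * real (n choose k))"
    by (rule dist_dg)
  also have "\<dots> = real (\<Sum>k\<le>n. (n choose k)^2)"
    by (simp add: power2_eq_square)
  also have "\<dots> = real ((2*n) choose n)" by (simp add: choose_square_sum)
  finally show ?thesis .
qed

lemma nat_alg:
  fixes n X A B D :: nat
  assumes "Suc n * X = Suc (Suc (2*n)) * A" "Suc (2*n) * B = D * Suc n" "D = A"
  shows "Suc n * X = 2 * (2*n+1) * B"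
proof -
  have "Suc n * X = 2 * (D * Suc n)" using assms(1,3) by (simp add: algebra_simps)
  also have "\<dots> = 2 * (Suc (2*n) * B)" using assms(2) by simp
  finally show ?thesis by simp
qed

lemma central: "Suc n * ((2 * Suc n) choose Suc n) = 2 * (2*n+1) * ((2*n) choose n)"
proof -
  have e: "2 * Suc n = Suc (Suc (2*n))" by simp
  have le: "Suc n \<le> Suc (2*n)" by simp
  have "Suc (2*n) choose Suc n = Suc (2*n) choose (Suc (2*n) - Suc n)" by (rule binomial_symmetric[OF le])
  also have "Suc (2*n) - Suc n = n" by simp
  finally have sy: "Suc (2*n) choose Suc n = Suc (2*n) choose n" .
  show ?thesis unfolding e by (rule nat_alg[OF Suc_times_binomial Suc_times_binomial_eq sy])
qed

lemma central_real: "real (Suc n) * real ((2 * Suc n) choose Suc n) = 2 * (2 * real n + 1) * real ((2*n) choose n)"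
proof -
  have "real (Suc n * ((2 * Suc n) choose Suc n)) = real (2 * (2*n+1) * ((2*n) choose n))"
    by (simp only: central)
  then show ?thesis by (simp only: of_nat_mult of_nat_add of_nat_1 of_nat_numeral)
qed

lemma E_closed: "E n = real n * real ((2*n) choose n)"
proof (induction n)
  case 0
  then show ?case by (simp add: E_def S0)
next
  case (Suc n)
  have "E (Suc n) = 4 * (real n * real ((2*n) choose n)) + 2 * real ((2*n) choose n)"
    using E_Suc[of n] Suc.IH Z_eq[of n] by simp
  also have "\<dots> = 2 * (2 * real n + 1) * real ((2*n) choose n)" by (simp add: algebra_simps)
  also have "\<dots> = real (Suc n) * real ((2 * Suc n) choose Suc n)" by (rule central_real[symmetric])
  finally show ?case .
qed

lemma alg:
  fixes w1 w2 e2 c0 c1 c2 :: real and n :: nat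
  assumes "3*w1 = 2*c0*(2*real n+1)*(2*real n+3)"
    "real (Suc n) * c1 = 2*(2*real n+1)*c0"
    "e2 = real (Suc (Suc n)) * c2"
    "real (Suc (Suc n)) * c2 = 2*(2*real (Suc n)+1)*c1"
    "w2 = 4*w1 + e2"
  shows "3*w2 = 2*c1*(2*real (Suc n)+1)*(2*real (Suc n)+3)"
proof -
  have "3*w2 = 4*(3*w1) + 3*e2" using assms(5) by simp
  also have "\<dots> = (2*real n+3) * (4*(2*c0*(2*real n+1))) + 6*(2*real n+3)*c1"
    using assms(1,3,4) by (simp add: algebra_simps)
  also have "4*(2*c0*(2*real n+1)) = 4*(real (Suc n) * c1)" using assms(2) by simp
  finally show ?thesis by (simp add: algebra_simps)
qed

lemma W0: "W 0 = 0" by (simp add: W_def S0 sd_def)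

lemma W_closed: "3 * W (Suc n) = 2 * real ((2*n) choose n) * (2 * real n + 1) * (2 * real n + 3)"
proof (induction n)
  case 0
  then show ?case using W_Suc[of 0] E_closed[of 1] W0 by simp
next
  case (Suc n)
  show ?case
    by (rule alg[OF Suc.IH central_real[of n] E_closed[of "Suc (Suc n)"] central_real[of "Suc n"] W_Suc[of "Suc n"]])
qed


lemma S_down: "X \<in> S n \<Longrightarrow> (i,j) \<in> X \<Longrightarrow> 1 \<le> a \<Longrightarrow> a \<le> b \<Longrightarrow> a \<le> i \<Longrightarrow> b \<le> j \<Longrightarrow> (a,b) \<in> X"
  by (simp add: S_iff)

lemma S_ge: "X \<in> S n \<Longrightarrow> (i,j) \<in> X \<Longrightarrow> 1 \<le> i \<and> i \<le> j \<and> j \<le> n"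
  using S_sub stair_mem by blast

lemma ins_min:
  assumes X: "X \<in> S n" and Y: "Y \<in> S n" and p: "p \<in> Y - X"
    and mn: "\<forall>q\<in>Y - X. fst p + snd p \<le> fst q + snd q"
  shows "insert p X \<in> S n"
  unfolding S_iff
proof (intro conjI allI impI)
  show "insert p X \<subseteq> shifted_staircase n" using p S_sub[OF X] S_sub[OF Y] by auto
next
  fix i j a b assume h: "(i, j) \<in> insert p X" "1 \<le> a" "a \<le> b" "a \<le> i" "b \<le> j"
  show "(a, b) \<in> insert p X"
  proof (cases "(i,j) \<in> X")
    case True then show ?thesis using S_down[OF X True h(2-5)] by simp
  next
    case False
    then have pij: "p = (i,j)" using h(1) by simp
    have abY: "(a,b) \<in> Y" using S_down[OF Y _ h(2-5)] p pij by simp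
    show ?thesis
    proof (rule ccontr)
      assume nab: "(a,b) \<notin> insert p X"
      then have "(a,b) \<in> Y - X" using abY by simp
      then have "i + j \<le> a + b" using mn pij by force
      moreover have "(a,b) \<noteq> (i,j)" using nab pij by simp
      ultimately show False using h(4,5) by auto
    qed
  qed
qed

lemma del_max:
  assumes X: "X \<in> S n" and Y: "Y \<in> S n" and p: "p \<in> X - Y"
    and mx: "\<forall>q\<in>X - Y. fst q + snd q \<le> fst p + snd p"
  shows "X - {p} \<in> S n"
  unfolding S_iff
proof (intro conjI allI impI)
  show "X - {p} \<subseteq> shifted_staircase n" using S_sub[OF X] by auto
next
  fix i j a b assume h: "(i, j) \<in> X - {p}" "1 \<le> a" "a \<le> b" "a \<le> i" "b \<le> j"
  have abX: "(a,b) \<in> X" using S_down[OF X _ h(2-5)] h(1) by simp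
  show "(a, b) \<in> X - {p}"
  proof (rule ccontr)
    assume "(a,b) \<notin> X - {p}"
    then have pab: "p = (a,b)" using abX by simp
    have "(i,j) \<notin> Y"
    proof
      assume "(i,j) \<in> Y"
      then have "(a,b) \<in> Y" using S_down[OF Y _ h(2-5)] by simp
      then show False using p pab by simp
    qed
    then have "(i,j) \<in> X - Y" using h(1) by simp
    then have "i + j \<le> a + b" using mx pab by force
    moreover have "(a,b) \<noteq> (i,j)" using h(1) pab by auto
    ultimately show False using h(4,5) by auto
  qed
qed

lemma pick_min:
  assumes "finite A" "A \<noteq> {}"
  obtains p where "p \<in> A" "\<forall>q\<in>A. fst p + snd p \<le> fst (q::nat\<times>nat) + snd q"
proof -
  obtain q0 where "q0 \<in> A" using assms by blast
  then obtain p where "p \<in> A" "\<forall>q. q \<in> A \<longrightarrow> fst p + snd p \<le> fst q + snd q"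
    using ex_has_least_nat[of "\<lambda>q. q \<in> A" q0 "\<lambda>q. fst q + snd q"] by blast
  then show ?thesis using that by blast
qed

lemma pick_max:
  assumes "finite A" "A \<noteq> {}"
  obtains p where "p \<in> A" "\<forall>q\<in>A. fst (q::nat\<times>nat) + snd q \<le> fst p + snd p"
proof -
  let ?F = "(\<lambda>q. fst q + snd q) ` A"
  have "Max ?F \<in> ?F" using assms by (intro Max_in) auto
  then obtain p where p: "p \<in> A" "fst p + snd p = Max ?F" by auto
  have "\<forall>q\<in>A. fst q + snd q \<le> fst p + snd p"
    using assms p(2) by (auto intro: Max_ge)
  then show ?thesis using that p(1) by blast
qed

lemma cover_one:
  assumes c: "covers (S n) X Y"
  shows "\<exists>p. p \<notin> X \<and> Y = insert p X"
proof -
  have X: "X \<in> S n" and Y: "Y \<in> S n" and sub: "X \<subset> Y"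
    and nk: "\<not> (\<exists>K\<in>S n. X \<subset> K \<and> K \<subset> Y)" using c by (auto simp: covers_def)
  have "finite (Y - X)" "Y - X \<noteq> {}" using S_finite_mem[OF Y] sub by auto
  then obtain p where p: "p \<in> Y - X" "\<forall>q\<in>Y - X. fst p + snd p \<le> fst q + snd q"
    by (rule pick_min)
  have K: "insert p X \<in> S n" by (rule ins_min[OF X Y p])
  have "insert p X \<subseteq> Y" "X \<subset> insert p X" using p sub by auto
  then have "insert p X = Y" using nk K by blast
  then show ?thesis using p by (intro exI[of _ p]) auto
qed

lemma adj_card: "hasse_adj (S n) X Y \<Longrightarrow> card (sd X Y) = 1"
proof -
  have a: "card (sd X Y) = 1" if c: "covers (S n) X Y" for X Y
  proof -
    obtain p where "p \<notin> X" "Y = insert p X" using cover_one[OF c] by blast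
    then have "sd X Y = {p}" by (auto simp: sd_def)
    then show ?thesis by simp
  qed
  have "sd X Y = sd Y X" by (auto simp: sd_def)
  assume "hasse_adj (S n) X Y"
  then show "card (sd X Y) = 1"
    unfolding hasse_adj_def
  proof
    assume "covers (S n) X Y" then show ?thesis by (rule a)
  next
    assume "covers (S n) Y X" then have "card (sd Y X) = 1" by (rule a)
    then show ?thesis using \<open>sd X Y = sd Y X\<close> by simp
  qed
qed

lemma walk_lower: "hasse_walk (S n) k I J \<Longrightarrow> card (sd I J) \<le> k"
proof (induction k arbitrary: I)
  case 0
  then obtain xs where "xs ! 0 = I" "xs ! 0 = J" unfolding hasse_walk_def by auto
  then show ?case by (simp add: sd_def)
next
  case (Suc k)
  then obtain xs where xs: "length xs = Suc (Suc k)" "xs ! 0 = I" "xs ! Suc k = J" "set xs \<subseteq> S n"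
     "\<forall>i<Suc k. hasse_adj (S n) (xs ! i) (xs ! Suc i)" unfolding hasse_walk_def by blast
  let ?I' = "xs ! 1"
  have "hasse_walk (S n) k ?I' J" unfolding hasse_walk_def
  proof (intro exI[of _ "tl xs"] conjI allI impI)
    show "length (tl xs) = Suc k" using xs by simp
    show "tl xs ! 0 = xs ! 1" using xs by (simp add: nth_tl)
    show "tl xs ! k = J" using xs by (simp add: nth_tl)
    show "set (tl xs) \<subseteq> S n" using xs(4) by (cases xs) auto
    fix i assume "i < k"
    then show "hasse_adj (S n) (tl xs ! i) (tl xs ! Suc i)" using xs by (simp add: nth_tl)
  qed
  then have IH: "card (sd ?I' J) \<le> k" by (rule Suc.IH)
  have adj: "card (sd I ?I') = 1" using xs(5)[rule_format, of 0] xs(2) adj_card by simp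
  have mem: "I \<in> S n" "?I' \<in> S n" "J \<in> S n" using xs by (auto simp: set_conv_nth)
  have fin: "finite (sd I ?I')" "finite (sd ?I' J)"
    using S_finite_mem mem by (auto simp: sd_def)
  have "sd I J \<subseteq> sd I ?I' \<union> sd ?I' J" by (auto simp: sd_def)
  then have "card (sd I J) \<le> card (sd I ?I' \<union> sd ?I' J)" using fin by (intro card_mono) auto
  also have "\<dots> \<le> card (sd I ?I') + card (sd ?I' J)" by (rule card_Un_le)
  finally show ?case using IH adj by simp
qed

lemma walk_cons:
  assumes "hasse_adj A I I'" "I \<in> A" "hasse_walk A k I' J"
  shows "hasse_walk A (Suc k) I J"
proof -
  obtain xs where xs: "length xs = Suc k" "xs ! 0 = I'" "xs ! k = J" "set xs \<subseteq> A"
     "\<forall>i<k. hasse_adj A (xs ! i) (xs ! Suc i)" using assms(3) unfolding hasse_walk_def by blast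
  show ?thesis unfolding hasse_walk_def
  proof (intro exI[of _ "I # xs"] conjI allI impI)
    fix i assume "i < Suc k"
    then show "hasse_adj A ((I # xs) ! i) ((I # xs) ! Suc i)"
      using xs assms(1) by (cases i) auto
  qed (use xs assms(2) in auto)
qed

lemma walk_exists: "I \<in> S n \<Longrightarrow> J \<in> S n \<Longrightarrow> hasse_walk (S n) (card (sd I J)) I J"
proof (induction "card (sd I J)" arbitrary: I)
  case 0
  have "finite (sd I J)" using S_finite_mem 0 by (auto simp: sd_def)
  then have "sd I J = {}" using 0 by simp
  then have "I = J" by (auto simp: sd_def)
  then show ?case unfolding hasse_walk_def using 0 by (intro exI[of _ "[I]"]) auto
next
  case (Suc m)
  have finI: "finite I" "finite J" using S_finite_mem Suc.prems by auto
  show ?case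
  proof (cases "I - J = {}")
    case False
    have fd: "finite (I - J)" using finI by simp
    obtain p where p: "p \<in> I - J" "\<forall>q\<in>I - J. fst q + snd q \<le> fst p + snd p"
      by (rule pick_max[OF fd False])
    have I': "I - {p} \<in> S n" by (rule del_max[OF Suc.prems p])
    have adj: "hasse_adj (S n) I (I - {p})"
      unfolding hasse_adj_def covers_def using I' Suc.prems p by blast
    have "sd (I - {p}) J = sd I J - {p}" using p by (auto simp: sd_def)
    moreover have "p \<in> sd I J" using p by (auto simp: sd_def)
    ultimately have c: "card (sd (I - {p}) J) = m" using Suc.hyps(2) finI by (simp add: sd_def)
    have w: "hasse_walk (S n) m (I - {p}) J" using Suc.hyps(1)[OF c[symmetric] I' Suc.prems(2)] c by simp
    show ?thesis using walk_cons[OF adj Suc.prems(1) w] Suc.hyps(2) by simp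
  next
    case True
    have "J - I \<noteq> {}"
    proof
      assume "J - I = {}"
      then have "sd I J = {}" using True by (auto simp: sd_def)
      then show False using Suc.hyps(2) by simp
    qed
    moreover have fd: "finite (J - I)" using finI by simp
    ultimately obtain p where p: "p \<in> J - I" "\<forall>q\<in>J - I. fst p + snd p \<le> fst q + snd q"
      using pick_min by blast
    have I': "insert p I \<in> S n" by (rule ins_min[OF Suc.prems(1,2) p])
    have adj: "hasse_adj (S n) I (insert p I)"
      unfolding hasse_adj_def covers_def using I' Suc.prems p by blast
    have "sd (insert p I) J = sd I J - {p}" using p by (auto simp: sd_def)
    moreover have "p \<in> sd I J" using p by (auto simp: sd_def)
    ultimately have c: "card (sd (insert p I) J) = m" using Suc.hyps(2) finI by (simp add: sd_def)
    have w: "hasse_walk (S n) m (insert p I) J" using Suc.hyps(1)[OF c[symmetric] I' Suc.prems(2)] c by simp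
    show ?thesis using walk_cons[OF adj Suc.prems(1) w] Suc.hyps(2) by simp
  qed
qed

lemma dist_eq: "I \<in> S n \<Longrightarrow> J \<in> S n \<Longrightarrow> hasse_dist (S n) I J = card (sd I J)"
  unfolding hasse_dist_def
  by (rule Least_equality) (auto intro: walk_exists dest: walk_lower)

lemma wiener_W: "real (wiener (S n)) = W n"
proof -
  have "wiener (S n) = (\<Sum>(p, q)\<in>S n \<times> S n. card (sd p q))"
    unfolding wiener_def by (rule sum.cong) (auto simp: dist_eq)
  also have "\<dots> = (\<Sum>p\<in>S n. \<Sum>q\<in>S n. card (sd p q))"
    by (rule sum.cartesian_product[symmetric])
  finally show ?thesis by (simp add: W_def)
qed


lemma alg2:
  fixes G0 G1 P C0 C1 m :: real
  assumes "3*G0*P = C0*(2*m+1)*(2*m+3)" "(1+m)*G1 = (-5/2 - m)*G0"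
    "(1+m)*C1 = 2*(2*m+1)*C0" "m \<ge> 0"
  shows "3*G1*(-4*P) = C1*(2*(m+1)+1)*(2*(m+1)+3)"
proof -
  have "(m+1)*(3*G1*(-4*P)) = -12*P*((1+m)*G1)" by (simp add: algebra_simps)
  also have "\<dots> = -12*P*((-5/2 - m)*G0)" using assms(2) by simp
  also have "\<dots> = (2*(2*m+5)) * (3*G0*P)" by (simp add: algebra_simps)
  also have "\<dots> = (2*(2*m+5)) * (C0*(2*m+1)*(2*m+3))" using assms(1) by simp
  also have "\<dots> = (2*m+3)*(2*m+5)*(2*(2*m+1)*C0)" by (simp add: algebra_simps)
  also have "\<dots> = (2*m+3)*(2*m+5)*((1+m)*C1)" using assms(3) by simp
  also have "\<dots> = (m+1)*(C1*(2*(m+1)+1)*(2*(m+1)+3))" by (simp add: algebra_simps)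
  finally have F: "(m+1)*(3*G1*(-4*P)) = (m+1)*(C1*(2*(m+1)+1)*(2*(m+1)+3))" .
  have nz: "m+1 \<noteq> 0" using assms(4) by simp
  show ?thesis using mult_left_cancel[OF nz] F by blast
qed

lemma gg: "3 * ((-5/2 :: real) gchoose n) * (-4)^n = real ((2*n) choose n) * (2*real n+1) * (2*real n+3)"
proof (induction n)
  case 0
  then show ?case by simp
next
  case (Suc n)
  have r: "(1 + real n) * ((-5/2 :: real) gchoose Suc n) = (-5/2 - real n) * ((-5/2 :: real) gchoose n)"
    using gbinomial_mult_1'[of "-5/2 :: real" n] by (simp add: algebra_simps)
  have "3 * ((-5/2 :: real) gchoose Suc n) * (-4 * (-4)^n) = real ((2 * Suc n) choose Suc n) * (2*(real n+1)+1) * (2*(real n+1)+3)"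
    by (rule alg2[OF Suc.IH r central_real[of n, unfolded of_nat_Suc]]) simp
  then show ?case by (simp add: algebra_simps)
qed

lemma W_Suc_gg: "W (Suc n) = 2 * (((-5/2 :: real) gchoose n) * (-4)^n)"
  using W_closed[of n] gg[of n] by simp

lemma final_alg:
  fixes x :: real
  assumes "\<bar>x\<bar> < 1/4"
  shows "2 * x * (1 - 4*x) powr (-5/2) =
    (8 * x * (1 + sqrt (1 - 4*x) - x * (3 + sqrt (1 - 4*x))) /
     ((1 - 4*x) * (1 - 4*x + sqrt (1 - 4*x)) ^ 3))"
proof -
  define s where "s = sqrt (1 - 4*x)"
  have pos: "1 - 4*x > 0" using assms by auto
  have spos: "s > 0" using pos by (simp add: s_def)
  have sq: "1 - 4*x = s^2" using pos by (simp add: s_def)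
  have hx: "x = (1 - s^2)/4" using sq by simp
  have pw: "(1 - 4*x) powr (-5/2) = 1 / ((1-4*x)^2 * s)"
  proof -
    have "(1 - 4*x) powr (5/2) = (1 - 4*x) powr (2 + 1/2)" by simp
    also have "\<dots> = (1-4*x) powr 2 * (1-4*x) powr (1/2)" by (rule powr_add)
    also have "\<dots> = (1-4*x)^2 * s" using pos by (simp add: s_def powr_half_sqrt)
    finally have "(1 - 4*x) powr (5/2) = (1-4*x)^2 * s" .
    then show ?thesis using pos by (simp add: powr_minus_divide)
  qed
  have key: "(1+s)^3 = 4*(1+s-x*(3+s))"
    unfolding hx power2_eq_square power3_eq_cube by (simp add: field_simps)
  have eq: "8 * x * (1 + s - x*(3+s)) = 2*x*(1+s)^3" using key by simp
  have d: "(1 - 4*x + s) = s * (1 + s)" unfolding sq by (simp add: power2_eq_square algebra_simps)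
  have "2 * x * (1 - 4*x) powr (-5/2) = 2*x / ((s^2)^2 * s)" unfolding pw by (simp add: sq)
  also have "\<dots> = 2*x*(1+s)^3 / (s^2 * (s * (1+s))^3)"
  proof -
    have e: "s^2 * (s * (1+s))^3 = ((s^2)^2 * s) * (1+s)^3"
      by (simp only: power_mult_distrib power2_eq_square power3_eq_cube) (simp add: algebra_simps)
    have nz: "(1+s)^3 \<noteq> 0" using spos by simp
    show ?thesis unfolding e using nonzero_mult_divide_mult_cancel_right[OF nz, of "2*x" "(s^2)^2 * s"] by simp
  qed
  also have "\<dots> = 8 * x * (1 + s - x*(3+s)) / ((1 - 4*x) * (1 - 4*x + s)^3)"
    by (simp only: eq d) (simp add: sq)
  finally show ?thesis by (simp add: s_def)
qed

theorem theorem1p5: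
  fixes x :: real
  assumes "\<bar>x\<bar> < 1/4"
  shows "(\<lambda>n. real (wiener (S n)) * x ^ n) sums
    (8 * x * (1 + sqrt (1 - 4*x) - x * (3 + sqrt (1 - 4*x))) /
     ((1 - 4*x) * (1 - 4*x + sqrt (1 - 4*x)) ^ 3))"
proof -
  have z: "\<bar>-4*x\<bar> < 1" using assms by auto
  have "(\<lambda>n. ((-5/2 :: real) gchoose n) * (-4*x)^n) sums (1 + (-4*x)) powr (-5/2)"
    by (rule gen_binomial_real[OF z])
  then have "(\<lambda>n. 2*x * (((-5/2 :: real) gchoose n) * (-4*x)^n)) sums (2*x*(1 + (-4*x)) powr (-5/2))"
    by (rule sums_mult)
  moreover have "(\<lambda>n. 2*x * (((-5/2 :: real) gchoose n) * (-4*x)^n)) = (\<lambda>n. W (Suc n) * x ^ Suc n)"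
  proof (rule ext)
    fix n
    have "(-4*x)^n = (-4)^n * x^n" by (rule power_mult_distrib)
    then show "2*x * (((-5/2 :: real) gchoose n) * (-4*x)^n) = W (Suc n) * x ^ Suc n"
      by (simp only: W_Suc_gg power_Suc) (simp add: algebra_simps)
  qed
  ultimately have "(\<lambda>n. W (Suc n) * x ^ Suc n) sums (2*x*(1 - 4*x) powr (-5/2))" by simp
  then have "(\<lambda>n. W n * x ^ n) sums (2*x*(1 - 4*x) powr (-5/2) + W 0 * x^0)"
    by (rule sums_Suc)
  then have "(\<lambda>n. real (wiener (S n)) * x ^ n) sums (2*x*(1 - 4*x) powr (-5/2))"
    by (simp add: wiener_W W0)
  then show ?thesis using final_alg[OF assms] by simp
qed

end
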